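(* Let $A\in\mathbb{R}^{n_x\times n_x}$, $B\in\mathbb{R}^{n_x\times n_u}$, $K\in\mathbb{R}^{n_u\times n_x}$, $F\in\mathbb{R}^{m_w\times n_x}$, $d\in\mathbb{R}^{m_w}$ with $d\ge0$, $\underline{P}\in\mathbb{R}^{\underline{m}\times n_x}$, $\underline{b}\in\mathbb{R}^{\underline m}$ with $\underline b\ge 0$, $\bar P\in\mathbb{R}^{\bar m\times n_x}$, $\bar b\in\mathbb{R}^{\bar m}$ with $\bar b\ge0$. (a) If for every $i\in\{1,\dots,\underline m\}$ there exist $\underline D_{[i]}\in\mathbb{D}_+^{\underline m}$ and $W_{[i]}\in\mathbb{D}_+^{m_w}$ with $$\begin{bmatrix}2\underline b_i-\underline b^\top\underline D_{[i]}\underline b-d^\top W_{[i]}d & \underline P_i & \underline P_i(A+BK)\\ * & F^\top W_{[i]}F & \mathbf 0\\ * & * & \underline P^\top\underline D_{[i]}\underline P\end{bmatrix}\succ0,$$ then $(A+BK)\mathcal{P}(\underline P,\underline b)\oplus\mathcal{P}(F,d)\subseteq\mathcal{P}(\underline P,\underline b)$. (b) If for every $i\in\{1,\dots,\bar m\}$ there exists $\bar D_{[i]}\in\mathbb{D}_+^{\bar m}$ with $$\begin{bmatrix}2\bar b_i-\bar b^\top\bar D_{[i]}\bar b & \bar P_i(A+BK)\\ * & \bar P^\top\bar D_{[i]}\bar P\end{bmatrix}\succ0,$$ then $(A+BK)\mathcal{P}(\bar P,\bar b)\subseteq\mathcal{P}(\bar P,\bar b)$.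
   Context: For $M\in\mathbb{R}^{m\times n}$ and $b\in\mathbb{R}^m$, $\mathcal{P}(M,b):=\{x\in\mathbb{R}^n:-b\le Mx\le b\}$ (componentwise). $M_i$ denotes the $i$-th row of $M$, $b_i$ the $i$-th entry of $b$. $\mathbb{D}_+^m$ is the set of $m\times m$ diagonal matrices with positive diagonal entries. $\succ0$ means symmetric positive definite, and $*$ denotes blocks determined by symmetry. $\oplus$ is Minkowski sum, and $C\mathcal{S}:=\{Cx:x\in\mathcal{S}\}$. *)

theory Defs
  imports "HOL-Analysis.Analysis"
begin

definition sympoly :: "real^'n^'m \<Rightarrow> real^'m \<Rightarrow> (real^'n) set" where
  "sympoly M b = {x. \<forall>i. - (b $ i) \<le> (M *v x) $ i \<and> (M *v x) $ i \<le> b $ i}"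

definition diag_pos :: "(real^'m^'m) set" where
  "diag_pos = {D. (\<forall>i j. i \<noteq> j \<longrightarrow> D $ i $ j = 0) \<and> (\<forall>i. D $ i $ i > 0)}"

definition pos_def :: "real^'n^'n \<Rightarrow> bool" where
  "pos_def M \<longleftrightarrow> transpose M = M \<and> (\<forall>x. x \<noteq> 0 \<longrightarrow> x \<bullet> (M *v x) > 0)"

text \<open>Symmetric 3x3 block matrix [a11 a12 a13; * a22 a23; * * a33], with a scalar
  first block; indices: Inl () first block, Inr (Inl i) second, Inr (Inr j) third.\<close>
definition block3 :: "real \<Rightarrow> real^'n \<Rightarrow> real^'k \<Rightarrow> real^'n^'n \<Rightarrow> real^'k^'n \<Rightarrow> real^'k^'k
    \<Rightarrow> real^(unit + 'n + 'k)^(unit + 'n + 'k)" where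
  "block3 a11 a12 a13 a22 a23 a33 = (\<chi> r c.
     (case r of
        Inl _ \<Rightarrow> (case c of Inl _ \<Rightarrow> a11 | Inr (Inl j) \<Rightarrow> a12 $ j | Inr (Inr j) \<Rightarrow> a13 $ j)
      | Inr (Inl i) \<Rightarrow> (case c of Inl _ \<Rightarrow> a12 $ i | Inr (Inl j) \<Rightarrow> a22 $ i $ j
                                | Inr (Inr j) \<Rightarrow> a23 $ i $ j)
      | Inr (Inr i) \<Rightarrow> (case c of Inl _ \<Rightarrow> a13 $ i | Inr (Inl j) \<Rightarrow> a23 $ j $ i
                                | Inr (Inr j) \<Rightarrow> a33 $ i $ j)))"

definition block2 :: "real \<Rightarrow> real^'n \<Rightarrow> real^'n^'n \<Rightarrow> real^(unit + 'n)^(unit + 'n)" where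
  "block2 a11 a12 a22 = (\<chi> r c.
     (case r of
        Inl _ \<Rightarrow> (case c of Inl _ \<Rightarrow> a11 | Inr j \<Rightarrow> a12 $ j)
      | Inr i \<Rightarrow> (case c of Inl _ \<Rightarrow> a12 $ i | Inr j \<Rightarrow> a22 $ i $ j)))"

end

theory Submission imports Defs begin

lemma quad_sum: "(x::real^'n) \<bullet> (M *v x) = (\<Sum>r\<in>UNIV. \<Sum>c\<in>UNIV. x$r * M$r$c * x$c)"
  by (simp add: inner_vec_def matrix_vector_mult_def sum_distrib_left mult.assoc)

lemma sum_Plus_UNIV: "sum (g::('a::finite + 'b::finite) \<Rightarrow> real) UNIV = sum (\<lambda>a. g (Inl a)) UNIV + sum (\<lambda>b. g (Inr b)) UNIV"
  by (subst UNIV_Plus_UNIV[symmetric], subst sum.Plus) (auto simp: comp_def)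

lemma block2_quad:
  fixes y :: "real^'n"
  shows "(\<chi> r. case r of Inl _ \<Rightarrow> 1 | Inr j \<Rightarrow> y $ j) \<bullet> (block2 a11 a12 a22 *v (\<chi> r. case r of Inl _ \<Rightarrow> 1 | Inr j \<Rightarrow> y $ j))
     = a11 + 2 * (a12 \<bullet> y) + y \<bullet> (a22 *v y)"
  unfolding quad_sum block2_def
  by (simp add: sum_Plus_UNIV inner_vec_def matrix_vector_mult_def sum_distrib_left sum.distrib algebra_simps)

lemma block3_quad:
  fixes y :: "real^'n" and x :: "real^'k"
  shows "(\<chi> r. case r of Inl _ \<Rightarrow> 1 | Inr (Inl j) \<Rightarrow> y $ j | Inr (Inr j) \<Rightarrow> x $ j) \<bullet> (block3 a11 a12 a13 a22 0 a33 *v (\<chi> r. case r of Inl _ \<Rightarrow> 1 | Inr (Inl j) \<Rightarrow> y $ j | Inr (Inr j) \<Rightarrow> x $ j))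
     = a11 + 2 * (a12 \<bullet> y) + 2 * (a13 \<bullet> x) + y \<bullet> (a22 *v y) + x \<bullet> (a33 *v x)"
  unfolding quad_sum block3_def
  by (simp add: sum_Plus_UNIV inner_vec_def matrix_vector_mult_def sum_distrib_left sum.distrib algebra_simps)

lemma diag_mv: "D \<in> diag_pos \<Longrightarrow> (D *v v) $ j = D$j$j * v$j"
  unfolding diag_pos_def matrix_vector_mult_def
  by (simp, subst sum.remove[of UNIV j], auto)

lemma diag_quad_le:
  assumes D: "D \<in> diag_pos" and b: "\<forall>i. - (b $ i) \<le> (P *v x) $ i \<and> (P *v x) $ i \<le> b $ i"
  shows "x \<bullet> ((transpose P ** D ** P) *v x) \<le> b \<bullet> (D *v b)"
proof -
  have "x \<bullet> ((transpose P ** D ** P) *v x) = (P *v x) \<bullet> (D *v (P *v x))"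
  proof -
    have "x \<bullet> ((transpose P ** D ** P) *v x) = x \<bullet> (transpose P *v (D *v (P *v x)))"
      by (simp only: matrix_vector_mul_assoc matrix_mul_assoc)
    also have "\<dots> = (x v* transpose P) \<bullet> (D *v (P *v x))"
      by (simp only: dot_lmul_matrix)
    finally show ?thesis by (simp only: vector_transpose_matrix)
  qed
  also have "\<dots> = (\<Sum>j\<in>UNIV. D$j$j * ((P *v x)$j)^2)"
    by (simp add: inner_vec_def diag_mv[OF D] power2_eq_square algebra_simps)
  also have "\<dots> \<le> (\<Sum>j\<in>UNIV. D$j$j * (b$j)^2)"
  proof (rule sum_mono)
    fix j
    have "D$j$j > 0" using D by (simp add: diag_pos_def)
    moreover have "((P *v x)$j)^2 \<le> (b$j)^2" using b[rule_format, of j]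
      by (simp add: abs_le_square_iff[symmetric] abs_le_iff)
    ultimately show "D$j$j * ((P *v x)$j)^2 \<le> D$j$j * (b$j)^2" by simp
  qed
  also have "\<dots> = b \<bullet> (D *v b)"
    by (simp add: inner_vec_def diag_mv[OF D] power2_eq_square algebra_simps)
  finally show ?thesis .
qed

lemma mv_neg: "(P::real^'n^'m) *v (- x) = - (P *v x)"
  by (vector matrix_vector_mult_def sum_negf[symmetric])

lemma mv_row: "((P::real^'n^'m) *v v) $ j = (P $ j) \<bullet> v"
  by (simp add: matrix_vector_mult_def inner_vec_def)

lemma partb:
  fixes M :: "real^'n^'n" and P :: "real^'n^'m" and b :: "real^'m"
  assumes H: "\<forall>i. \<exists>D \<in> diag_pos. pos_def (block2 (2 * b $ i - b \<bullet> (D *v b)) ((P $ i) v* M) (transpose P ** D ** P))"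
  shows "(\<lambda>x. M *v x) ` sympoly P b \<subseteq> sympoly P b"
proof
  fix v assume "v \<in> (\<lambda>x. M *v x) ` sympoly P b"
  then obtain x where v: "v = M *v x" and x: "\<forall>i. - (b $ i) \<le> (P *v x) $ i \<and> (P *v x) $ i \<le> b $ i"
    by (auto simp: sympoly_def)
  have "- (b $ i) \<le> (P *v v) $ i \<and> (P *v v) $ i \<le> b $ i" for i
  proof -
    obtain D where D: "D \<in> diag_pos" and pd: "pos_def (block2 (2 * b $ i - b \<bullet> (D *v b)) ((P $ i) v* M) (transpose P ** D ** P))"
      using H by blast
    have xm: "\<forall>i. - (b $ i) \<le> (P *v (-x)) $ i \<and> (P *v (-x)) $ i \<le> b $ i"
      using x by (simp add: mv_neg) (meson minus_le_iff neg_le_iff_le)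
    have q: "0 < 2 * b $ i - b \<bullet> (D *v b) + 2 * (((P $ i) v* M) \<bullet> y) + y \<bullet> ((transpose P ** D ** P) *v y)" for y
    proof -
      let ?z = "(\<chi> r. case r of Inl _ \<Rightarrow> 1 | Inr j \<Rightarrow> y $ j) :: real^(unit+'n)"
      have "?z \<noteq> 0" by (metis (no_types, lifting) old.sum.simps(5) vec_lambda_beta zero_index zero_neq_one)
      with pd have "0 < ?z \<bullet> (block2 (2 * b $ i - b \<bullet> (D *v b)) ((P $ i) v* M) (transpose P ** D ** P) *v ?z)"
        by (simp add: pos_def_def)
      thus ?thesis by (simp only: block2_quad)
    qed
    have e: "((P $ i) v* M) \<bullet> y = (P *v (M *v y)) $ i" for y
      by (simp add: dot_lmul_matrix mv_row)
    have 1: "(P *v v) $ i < b $ i"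
      using q[of "-x"] diag_quad_le[OF D xm] e[of "-x"] v
      by (simp add: mv_neg)
    have 2: "- (b $ i) < (P *v v) $ i"
      using q[of "x"] diag_quad_le[OF D x] e[of "x"] v by simp
    show ?thesis using 1 2 by simp
  qed
  thus "v \<in> sympoly P b" by (simp add: sympoly_def)
qed
lemma neg_in: "\<forall>i. - (b $ i) \<le> ((P::real^'n^'m) *v x) $ i \<and> (P *v x) $ i \<le> b $ i \<Longrightarrow>
   \<forall>i. - (b $ i) \<le> (P *v (-x)) $ i \<and> (P *v (-x)) $ i \<le> b $ i"
  by (simp add: mv_neg) (meson minus_le_iff neg_le_iff_le)

lemma parta:
  fixes M :: "real^'n^'n" and P :: "real^'n^'m" and b :: "real^'m"
    and F :: "real^'n^'k" and d :: "real^'k"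
  assumes H: "\<forall>i. \<exists>D \<in> diag_pos. \<exists>W \<in> diag_pos.
        pos_def (block3 (2 * b $ i - b \<bullet> (D *v b) - d \<bullet> (W *v d))
                        (P $ i) ((P $ i) v* M)
                        (transpose F ** W ** F) 0
                        (transpose P ** D ** P))"
  shows "{y + w | y w. y \<in> (\<lambda>x. M *v x) ` sympoly P b \<and> w \<in> sympoly F d} \<subseteq> sympoly P b"
proof
  fix v assume "v \<in> {y + w | y w. y \<in> (\<lambda>x. M *v x) ` sympoly P b \<and> w \<in> sympoly F d}"
  then obtain x w where v: "v = M *v x + w" and x: "\<forall>i. - (b $ i) \<le> (P *v x) $ i \<and> (P *v x) $ i \<le> b $ i"
    and w: "\<forall>i. - (d $ i) \<le> (F *v w) $ i \<and> (F *v w) $ i \<le> d $ i"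
    by (auto simp: sympoly_def)
  have "- (b $ i) \<le> (P *v v) $ i \<and> (P *v v) $ i \<le> b $ i" for i
  proof -
    obtain D W where D: "D \<in> diag_pos" and W: "W \<in> diag_pos" and pd: "pos_def (block3 (2 * b $ i - b \<bullet> (D *v b) - d \<bullet> (W *v d))
                        (P $ i) ((P $ i) v* M)
                        (transpose F ** W ** F) 0
                        (transpose P ** D ** P))"
      using H by blast
    have q: "0 < 2 * b $ i - b \<bullet> (D *v b) - d \<bullet> (W *v d) + 2 * ((P $ i) \<bullet> y) + 2 * (((P $ i) v* M) \<bullet> u)
       + y \<bullet> ((transpose F ** W ** F) *v y) + u \<bullet> ((transpose P ** D ** P) *v u)" for y u
    proof -
      let ?z = "(\<chi> r. case r of Inl _ \<Rightarrow> 1 | Inr (Inl j) \<Rightarrow> y $ j | Inr (Inr j) \<Rightarrow> u $ j) :: real^(unit+'n+'n)"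
      have "?z $ Inl () = 1" by simp
      hence "?z \<noteq> 0" by (metis zero_index zero_neq_one)
      with pd have "0 < ?z \<bullet> (block3 (2 * b $ i - b \<bullet> (D *v b) - d \<bullet> (W *v d))
                        (P $ i) ((P $ i) v* M)
                        (transpose F ** W ** F) 0
                        (transpose P ** D ** P) *v ?z)"
        by (simp add: pos_def_def)
      thus ?thesis by (simp only: block3_quad)
    qed
    have e: "((P $ i) v* M) \<bullet> y = (P *v (M *v y)) $ i" for y
      by (simp add: dot_lmul_matrix mv_row)
    have e2: "(P $ i) \<bullet> y = (P *v y) $ i" for y by (simp add: mv_row)
    have pv: "(P *v v) $ i = (P *v (M *v x)) $ i + (P *v w) $ i"
      by (simp add: v matrix_vector_right_distrib)
    have 1: "(P *v v) $ i < b $ i"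
      using q[of "-w" "-x"] diag_quad_le[OF D neg_in[OF x]] diag_quad_le[OF W neg_in[OF w]] e[of "-x"] e2[of "-w"] pv
      by (simp add: mv_neg)
    have 2: "- (b $ i) < (P *v v) $ i"
      using q[of "w" "x"] diag_quad_le[OF D x] diag_quad_le[OF W w] e[of "x"] e2[of w] pv by simp
    show ?thesis using 1 2 by simp
  qed
  thus "v \<in> sympoly P b" by (simp add: sympoly_def)
qed

theorem mainTheorem3:
  fixes A :: "real^'nx^'nx" and B :: "real^'nu^'nx" and K :: "real^'nx^'nu"
    and F :: "real^'nx^'mw" and d :: "real^'mw"
    and Pl :: "real^'nx^'ml" and bl :: "real^'ml"
    and Pu :: "real^'nx^'mu" and bu :: "real^'mu"
  assumes d_nonneg: "\<forall>i. d $ i \<ge> 0"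
    and bl_nonneg: "\<forall>i. bl $ i \<ge> 0"
    and bu_nonneg: "\<forall>i. bu $ i \<ge> 0"
  shows
   "((\<forall>i. \<exists>D \<in> diag_pos. \<exists>W \<in> diag_pos.
        pos_def (block3 (2 * bl $ i - bl \<bullet> (D *v bl) - d \<bullet> (W *v d))
                        (Pl $ i) ((Pl $ i) v* (A + B ** K))
                        (transpose F ** W ** F) 0
                        (transpose Pl ** D ** Pl)))
     \<longrightarrow> {y + w | y w. y \<in> (\<lambda>x. (A + B ** K) *v x) ` sympoly Pl bl \<and> w \<in> sympoly F d}
           \<subseteq> sympoly Pl bl)
    \<and>
    ((\<forall>i. \<exists>D \<in> diag_pos.
        pos_def (block2 (2 * bu $ i - bu \<bullet> (D *v bu))
                        ((Pu $ i) v* (A + B ** K))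
                        (transpose Pu ** D ** Pu)))
     \<longrightarrow> (\<lambda>x. (A + B ** K) *v x) ` sympoly Pu bu \<subseteq> sympoly Pu bu)"
  using parta[where P=Pl and M="A + B ** K" and b=bl and d=d and F=F] partb[where P=Pu and b=bu and M="A + B ** K"] by blast

end
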